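(* Let $f$ be a probability density on $\mathbb{R}$ symmetric about $0$, let $G$ be an absolutely continuous cumulative distribution function on $\mathbb{R}$ symmetric about $0$ with density $g$, and let $\omega:\mathbb{R}\to\mathbb{R}$ be an odd function with $\omega(x)>0$ for $x>0$. Assume $g$ is a bounded probability density and $\int_0^\infty\omega(x)f(x)\,dx<\infty$, and define $$\pi_{TV}(\lambda\mid 1,1)=2\int_0^\infty \omega(x)\,f(x)\,g(\lambda\,\omega(x))\,dx,\qquad \lambda\in\mathbb{R}.$$ Then: (i) $\pi_{TV}(\lambda\mid 1,1)$ is symmetric about $\lambda=0$; (ii) if $g$ is unimodal, then $\pi_{TV}(\lambda\mid 1,1)$ is decreasing in $|\lambda|$; (iii) if $\omega(x)=x$, $f$ is unimodal, $f(0)=M<\infty$ and $\int_0^\infty x\,g(x)\,dx<\infty$, then the tails of $\pi_{TV}(\lambda\mid 1,1)$ are of order $O(|\lambda|^{-2})$ as $|\lambda|\to\infty$.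
   Context: This $\pi_{TV}(\lambda\mid1,1)$ is the $BTV(1,1)$ prior for the skewness parameter $\lambda$ of the skew-symmetric densities $\frac{2}{\sigma}f\left(\frac{x-\mu}{\sigma}\right)G\left(\lambda\,\omega\left(\frac{x-\mu}{\sigma}\right)\right)$; it equals $\frac{d}{d\lambda}M_{TV}(\lambda)$ where $M_{TV}(\lambda)=\operatorname{sign}(\lambda)\frac12\int_{\mathbb{R}}|2G(\lambda\omega(x))-1|f(x)\,dx$. *)

theory Defs
  imports "HOL-Analysis.Analysis" "HOL-Library.Landau_Symbols"
begin

definition prob_density :: "(real \<Rightarrow> real) \<Rightarrow> bool" where
  "prob_density h \<longleftrightarrow> h \<in> borel_measurable borel \<and> (\<forall>x. 0 \<le> h x) \<and>
     integrable lborel h \<and> integral\<^sup>L lborel h = 1"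

definition unimodal :: "(real \<Rightarrow> real) \<Rightarrow> bool" where
  "unimodal h \<longleftrightarrow> (\<exists>m. mono_on {..m} h \<and> antimono_on {m..} h)"

definition piTV :: "(real \<Rightarrow> real) \<Rightarrow> (real \<Rightarrow> real) \<Rightarrow> (real \<Rightarrow> real) \<Rightarrow> real \<Rightarrow> real" where
  "piTV \<omega> f g l = 2 * (LINT x:{0..}|lborel. \<omega> x * f x * g (l * \<omega> x))"

end

theory Submission
  imports Defs
begin

lemma sym_unimodal_le:
  fixes g :: "real \<Rightarrow> real"
  assumes u: "unimodal g" and s: "\<And>x. g (- x) = g x" and le: "\<bar>a\<bar> \<le> \<bar>b\<bar>"
  shows "g b \<le> g a"
proof -
  obtain m where m1: "mono_on {..m} g" and m2: "antimono_on {m..} g"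
    using u unfolding unimodal_def by blast
  have abs_eq: "g \<bar>x\<bar> = g x" for x using s[of x] by (cases "x \<ge> 0") auto
  have key: "g v \<le> g u" if "0 \<le> u" "u \<le> v" for u v
  proof (cases "m \<le> u")
    case True
    then show ?thesis using monotone_onD[OF m2, of u v] that by auto
  next
    case False
    show ?thesis
    proof (cases "v \<le> m")
      case True
      have "g (-v) \<le> g (-u)" using mono_onD[OF m1, of "-v" "-u"] that True False by auto
      then show ?thesis using s by simp
    next
      case F2: False
      have "g v \<le> g m" using monotone_onD[OF m2, of m v] F2 by auto
      moreover have "g (-m) \<le> g (-u)" using mono_onD[OF m1, of "-m" "-u"] that False by auto
      ultimately show ?thesis using s by simp
    qed
  qed
  have "g \<bar>b\<bar> \<le> g \<bar>a\<bar>" using key[of "\<bar>a\<bar>" "\<bar>b\<bar>"] le by simp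
  then show ?thesis using abs_eq by simp
qed

lemma int_lemma:
  fixes f g \<omega> :: "real \<Rightarrow> real"
  assumes "set_integrable lborel {0..} (\<lambda>x. \<omega> x * f x)"
    and [measurable]: "\<omega> \<in> borel_measurable borel" "f \<in> borel_measurable borel" "g \<in> borel_measurable borel"
    and "\<And>x. 0 \<le> g x" "\<And>x. g x \<le> B"
  shows "set_integrable lborel {0..} (\<lambda>x. \<omega> x * f x * g (l * \<omega> x))"
proof -
  have I: "integrable lborel (\<lambda>x. B *\<^sub>R (indicator {0..} x *\<^sub>R (\<omega> x * f x)))"
    using assms(1) unfolding set_integrable_def by (intro integrable_scaleR_right)
  show ?thesis unfolding set_integrable_def
  proof (rule Bochner_Integration.integrable_bound[OF I])
  show "(\<lambda>x. indicator {0..} x *\<^sub>R (\<omega> x * f x * g (l * \<omega> x))) \<in> borel_measurable lborel"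
    by measurable
  have "norm (indicator {0..} x *\<^sub>R (\<omega> x * f x * g (l * \<omega> x)))
        \<le> norm (B *\<^sub>R (indicator {0..} x *\<^sub>R (\<omega> x * f x)))" for x
  proof -
    have B: "0 \<le> B" using assms(5)[of 0] assms(6)[of 0] by linarith
    have "\<bar>g (l * \<omega> x)\<bar> \<le> \<bar>B\<bar>" using assms(5,6) B by (simp add: abs_of_nonneg)
    then have "\<bar>\<omega> x * f x\<bar> * \<bar>g (l * \<omega> x)\<bar> \<le> \<bar>\<omega> x * f x\<bar> * \<bar>B\<bar>"
      by (intro mult_left_mono) auto
    then show ?thesis by (auto simp: indicator_def abs_mult algebra_simps)
  qed
  then show "AE x in lborel. norm (indicator {0..} x *\<^sub>R (\<omega> x * f x * g (l * \<omega> x)))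
        \<le> norm (B *\<^sub>R (indicator {0..} x *\<^sub>R (\<omega> x * f x)))" by simp
qed
qed

theorem theorem1:
  fixes f g G \<omega> :: "real \<Rightarrow> real"
  assumes f_dens: "prob_density f"
    and f_sym: "\<And>x. f (- x) = f x"
    and g_dens: "prob_density g"
    and g_sym: "\<And>x. g (- x) = g x"
    and G_cdf: "\<And>x. G x = (LINT t:{..x}|lborel. g t)"
    and G_sym: "\<And>x. G (- x) = 1 - G x"
    and g_bdd: "\<exists>B. \<forall>x. g x \<le> B"
    and \<omega>_meas: "\<omega> \<in> borel_measurable borel"
    and \<omega>_odd: "\<And>x. \<omega> (- x) = - \<omega> x"
    and \<omega>_pos: "\<And>x. x > 0 \<Longrightarrow> \<omega> x > 0"
    and \<omega>f_int: "set_integrable lborel {0..} (\<lambda>x. \<omega> x * f x)"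
  shows "(\<forall>l. piTV \<omega> f g (- l) = piTV \<omega> f g l)
       \<and> (unimodal g \<longrightarrow> (\<forall>a b. \<bar>a\<bar> \<le> \<bar>b\<bar> \<longrightarrow> piTV \<omega> f g b \<le> piTV \<omega> f g a))
       \<and> ((\<forall>x. \<omega> x = x) \<and> unimodal f \<and> set_integrable lborel {0..} (\<lambda>x. x * g x)
            \<longrightarrow> piTV \<omega> f g \<in> O[at_infinity](\<lambda>l. 1 / l ^ 2))"
proof -
  obtain B where B: "\<And>x. g x \<le> B" using g_bdd by blast
  have g0: "\<And>x. 0 \<le> g x" and gm: "g \<in> borel_measurable borel"
    using g_dens unfolding prob_density_def by auto
  have f0: "\<And>x. 0 \<le> f x" and fm: "f \<in> borel_measurable borel"
    using f_dens unfolding prob_density_def by auto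
  have w0: "\<And>x. x \<ge> 0 \<Longrightarrow> \<omega> x \<ge> 0"
  proof -
    fix x :: real assume "x \<ge> 0"
    moreover have "\<omega> 0 = 0" using \<omega>_odd[of 0] by simp
    ultimately show "\<omega> x \<ge> 0" using \<omega>_pos[of x] by (cases "x = 0") auto
  qed
  have INT: "\<And>l. set_integrable lborel {0..} (\<lambda>x. \<omega> x * f x * g (l * \<omega> x))"
    by (rule int_lemma[OF \<omega>f_int \<omega>_meas fm gm g0 B])
  have P1: "\<forall>l. piTV \<omega> f g (- l) = piTV \<omega> f g l"
  proof
    fix l :: real
    have "\<And>x. g (- l * \<omega> x) = g (l * \<omega> x)" by (simp only: mult_minus_left g_sym)
    then show "piTV \<omega> f g (- l) = piTV \<omega> f g l" unfolding piTV_def by simp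
  qed
  have nonneg: "\<And>l. piTV \<omega> f g l \<ge> 0"
    unfolding piTV_def set_lebesgue_integral_def using w0 f0 g0 by (auto intro!: Bochner_Integration.integral_nonneg simp: indicator_def)
  have P2: "unimodal g \<longrightarrow> (\<forall>a b. \<bar>a\<bar> \<le> \<bar>b\<bar> \<longrightarrow> piTV \<omega> f g b \<le> piTV \<omega> f g a)"
  proof (intro impI allI)
    fix a b :: real assume u: "unimodal g" and ab: "\<bar>a\<bar> \<le> \<bar>b\<bar>"
    have "(LINT x:{0..}|lborel. \<omega> x * f x * g (b * \<omega> x)) \<le> (LINT x:{0..}|lborel. \<omega> x * f x * g (a * \<omega> x))"
    proof (rule set_integral_mono[OF INT INT])
      fix x :: real assume "x \<in> {0..}"
      then have wx: "\<omega> x \<ge> 0" using w0 by auto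
      have "\<bar>a * \<omega> x\<bar> \<le> \<bar>b * \<omega> x\<bar>" using ab wx by (simp add: abs_mult mult_right_mono)
      then have "g (b * \<omega> x) \<le> g (a * \<omega> x)" by (rule sym_unimodal_le[OF u g_sym])
      then show "\<omega> x * f x * g (b * \<omega> x) \<le> \<omega> x * f x * g (a * \<omega> x)"
        using wx f0[of x] by (intro mult_left_mono) auto
    qed
    then show "piTV \<omega> f g b \<le> piTV \<omega> f g a" unfolding piTV_def by simp
  qed
  have P3: "piTV \<omega> f g \<in> O[at_infinity](\<lambda>l. 1 / l ^ 2)"
    if wid: "\<forall>x. \<omega> x = x" and uf: "unimodal f" and xg: "set_integrable lborel {0..} (\<lambda>x. x * g x)"
  proof -
    have weq: "\<omega> = (\<lambda>x. x)" using wid by auto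
    obtain m where m1: "mono_on {..m} f" and m2: "antimono_on {m..} f"
      using uf unfolding unimodal_def by blast
    have fM: "f x \<le> f m" for x
      using mono_onD[OF m1, of x m] monotone_onD[OF m2, of m x] by (cases "x \<le> m") auto
    define C where "C = (LINT x:{0..}|lborel. x * g x)"
    have bound: "piTV \<omega> f g l \<le> 2 * f m * C / l^2" if l: "l > 0" for l
    proof -
      define h where "h x = indicator {0..} x *\<^sub>R (x * f x * g (l * x))" for x :: real
      have "(LINT x:{0..}|lborel. \<omega> x * f x * g (l * \<omega> x)) = integral\<^sup>L lborel h"
        unfolding set_lebesgue_integral_def h_def weq by simp
      also have "\<dots> = \<bar>1/l\<bar> *\<^sub>R integral\<^sup>L lborel (\<lambda>x. h (0 + (1/l) * x))"
        by (rule lborel_integral_real_affine) (use l in auto)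
      also have "\<dots> = (1/l) * integral\<^sup>L lborel (\<lambda>x. indicator {0..} x * ((x/l) * f (x/l) * g x))"
        using l by (auto simp: h_def indicator_def zero_le_divide_iff intro!: Bochner_Integration.integral_cong)
      also have "\<dots> \<le> (1/l) * integral\<^sup>L lborel (\<lambda>x. (f m / l) * (indicator {0..} x * (x * g x)))"
      proof (intro mult_left_mono integral_mono)
        have hi: "integrable lborel h" using INT[of l] unfolding set_integrable_def h_def weq .
        have "integrable lborel (\<lambda>x. h (0 + (1/l) * x))"
          by (rule lborel_integrable_real_affine[OF hi]) (use l in auto)
        moreover have "(\<lambda>x. h (0 + (1/l) * x)) = (\<lambda>x. indicator {0..} x * ((x/l) * f (x/l) * g x))"
          using l by (auto simp: h_def indicator_def fun_eq_iff zero_le_divide_iff)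
        ultimately show "integrable lborel (\<lambda>x. indicator {0..} x * ((x/l) * f (x/l) * g x))" by simp
        show "integrable lborel (\<lambda>x. (f m / l) * (indicator {0..} x * (x * g x)))"
          using xg unfolding set_integrable_def by (intro integrable_mult_right) simp
        fix x :: real
        have "(x/l) * f (x/l) * g x \<le> (f m / l) * (x * g x)" if "x \<ge> 0"
        proof -
          have "(x/l * g x) * f (x/l) \<le> (x/l * g x) * f m"
            using fM that l g0[of x] by (intro mult_left_mono) auto
          then show ?thesis by (simp add: algebra_simps)
        qed
        then show "indicator {0..} x * ((x/l) * f (x/l) * g x) \<le> (f m / l) * (indicator {0..} x * (x * g x))"
          by (auto simp: indicator_def)
      qed (use l in auto)
      also have "\<dots> = f m * C / l^2"
        unfolding C_def set_lebesgue_integral_def by (simp add: power2_eq_square)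
      finally show ?thesis unfolding piTV_def by simp
    qed
    show ?thesis
    proof (rule bigoI[where c = "2 * f m * C"])
      show "eventually (\<lambda>l. norm (piTV \<omega> f g l) \<le> 2 * f m * C * norm (1 / l^2)) at_infinity"
        unfolding eventually_at_infinity
      proof (intro exI[of _ 1] allI impI)
        fix l :: real assume "1 \<le> norm l"
        then have lp: "\<bar>l\<bar> > 0" by simp
        have "piTV \<omega> f g l = piTV \<omega> f g \<bar>l\<bar>" using P1 using P1 by (simp add: abs_if)
        also have "\<dots> \<le> 2 * f m * C / \<bar>l\<bar>^2" by (rule bound[OF lp])
        finally show "norm (piTV \<omega> f g l) \<le> 2 * f m * C * norm (1 / l^2)"
          using nonneg[of l] by simp
      qed
    qed
  qed
  show ?thesis using P1 P2 P3 by blast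
qed

end
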